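(* Let $n\ge 4$ and let $\mathcal D_n$ be a minimal DFA with state set $Q_n=\{0,\dots,n-1\}$, initial state $0$ and unique final state $n-1$, recognizing a two-sided ideal, and let $T_n$ be its transition semigroup. If $|T_n|=n^{n-2}+(n-2)2^{n-2}+1$, then $T_n=S_n$.
   Context: A two-sided ideal is a nonempty $L\subseteq\Sigma^*$ with $L=\Sigma^*L\Sigma^*$. The transition semigroup of a DFA is the set of transformations $q\mapsto\delta(q,w)$ of its states induced by nonempty words $w$. Notation: $(p\to q)$ maps $p$ to $q$ and fixes all other states; $(p_0,\dots,p_{k-1})$ is the cyclic permutation $p_0\mapsto\cdots\mapsto p_{k-1}\mapsto p_0$ fixing all other states. $S_n$ (for $n\ge4$) is the transition semigroup of the DFA $\mathcal W_n$ with states $Q_n$, initial state $0$, final states $\{n-1\}$, alphabet $\{a,b,c,d,e,f\}$, where $a$ induces $(1,2,\dots,n-2)$, $b$ induces $(1,2)$, $c$ induces $(n-2\to 1)$, $d$ induces $(n-2\to 0)$, $e$ maps every state in $\{0,\dots,n-2\}$ to $1$ and fixes $n-1$, and $f$ induces $(1\to n-1)$. *)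

theory Defs
  imports Main
begin

definition dfa :: "nat \<Rightarrow> 'a set \<Rightarrow> (nat \<Rightarrow> 'a \<Rightarrow> nat) \<Rightarrow> bool" where
  "dfa n Al delta \<longleftrightarrow> finite Al \<and> (\<forall>q<n. \<forall>x\<in>Al. delta q x < n)"

definition steps :: "(nat \<Rightarrow> 'a \<Rightarrow> nat) \<Rightarrow> nat \<Rightarrow> 'a list \<Rightarrow> nat" where
  "steps delta q w = fold (\<lambda>x p. delta p x) w q"

definition lang :: "nat \<Rightarrow> 'a set \<Rightarrow> (nat \<Rightarrow> 'a \<Rightarrow> nat) \<Rightarrow> 'a list set" where
  "lang n Al delta = {w \<in> lists Al. steps delta 0 w = n - 1}"

definition minimal_dfa :: "nat \<Rightarrow> 'a set \<Rightarrow> (nat \<Rightarrow> 'a \<Rightarrow> nat) \<Rightarrow> bool" where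
  "minimal_dfa n Al delta \<longleftrightarrow>
     (\<forall>q<n. \<exists>w\<in>lists Al. steps delta 0 w = q) \<and>
     (\<forall>p<n. \<forall>q<n. p \<noteq> q \<longrightarrow>
        (\<exists>w\<in>lists Al. (steps delta p w = n - 1) \<noteq> (steps delta q w = n - 1)))"

definition two_sided_ideal :: "'a set \<Rightarrow> 'a list set \<Rightarrow> bool" where
  "two_sided_ideal Al L \<longleftrightarrow> L \<noteq> {} \<and>
     L = {u @ v @ x | u v x. u \<in> lists Al \<and> v \<in> L \<and> x \<in> lists Al}"

text \<open>Transformation of Q_n induced by a word (identity outside Q_n, so that
  transformations are compared only on Q_n).\<close>
definition transf :: "nat \<Rightarrow> (nat \<Rightarrow> 'a \<Rightarrow> nat) \<Rightarrow> 'a list \<Rightarrow> nat \<Rightarrow> nat" where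
  "transf n delta w = (\<lambda>q. if q < n then steps delta q w else q)"

definition trans_semigroup :: "nat \<Rightarrow> 'a set \<Rightarrow> (nat \<Rightarrow> 'a \<Rightarrow> nat) \<Rightarrow> (nat \<Rightarrow> nat) set" where
  "trans_semigroup n Al delta = {transf n delta w | w. w \<in> lists Al \<and> w \<noteq> []}"

datatype letter = La | Lb | Lc | Ld | Le | Lf

definition deltaW :: "nat \<Rightarrow> nat \<Rightarrow> letter \<Rightarrow> nat" where
  "deltaW n q x = (case x of
      La \<Rightarrow> (if 1 \<le> q \<and> q < n - 2 then q + 1 else if q = n - 2 then 1 else q)
    | Lb \<Rightarrow> (if q = 1 then 2 else if q = 2 then 1 else q)
    | Lc \<Rightarrow> (if q = n - 2 then 1 else q)
    | Ld \<Rightarrow> (if q = n - 2 then 0 else q)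
    | Le \<Rightarrow> (if q \<le> n - 2 then 1 else q)
    | Lf \<Rightarrow> (if q = 1 then n - 1 else q))"

definition S :: "nat \<Rightarrow> (nat \<Rightarrow> nat) set" where
  "S n = trans_semigroup n UNIV (deltaW n)"

end

theory Submission
  imports Defs "HOL-Combinatorics.Permutations" "HOL-Library.FuncSet"
begin


lemma steps_Nil[simp]: "steps delta q [] = q" by (simp add: steps_def)
lemma steps_Cons[simp]: "steps delta q (x#w) = steps delta (delta q x) w" by (simp add: steps_def)
lemma steps_append: "steps delta q (u@v) = steps delta (steps delta q u) v" by (simp add: steps_def)

locale W = fixes n :: nat assumes n4: "n \<ge> 4" begin


abbreviation tw where "tw w \<equiv> transf n (deltaW n) w"
abbreviation Mid where "Mid \<equiv> {1..n-2}"

lemma deltaW_lt: "q < n \<Longrightarrow> deltaW n q x < n"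
  using n4 by (cases x) (auto simp: deltaW_def)

lemma stepsW_lt: "q < n \<Longrightarrow> steps (deltaW n) q w < n"
  by (induction w arbitrary: q) (auto simp: deltaW_lt)

lemma tw_append: "tw (u@v) = tw v \<circ> tw u"
  by (rule ext) (auto simp: transf_def steps_append stepsW_lt)

lemma S_mem: "t \<in> S n \<longleftrightarrow> (\<exists>w. w \<noteq> [] \<and> t = tw w)"
  by (auto simp: S_def trans_semigroup_def)

lemma S_comp: "s \<in> S n \<Longrightarrow> t \<in> S n \<Longrightarrow> t \<circ> s \<in> S n"
  unfolding S_mem by (metis append_is_Nil_conv tw_append)

lemma tw_single: "tw [x] = (\<lambda>q. if q < n then deltaW n q x else q)"
  by (rule ext) (simp add: transf_def)

lemma letter_S: "tw [x] \<in> S n"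
  unfolding S_mem by blast

lemma b_eq: "tw [Lb] = Transposition.transpose 1 2"
  using n4 by (auto simp: tw_single deltaW_def transpose_def fun_eq_iff)

lemma id_S: "id \<in> S n"
proof -
  have "tw [Lb] \<circ> tw [Lb] = id" by (simp add: b_eq fun_eq_iff)
  then show ?thesis using S_comp[OF letter_S letter_S] by metis
qed

definition Af where "Af = (\<lambda>q. if 1 \<le> q \<and> q < n-2 then q+1 else if q = n-2 then 1 else q)"

lemma tw_La: "tw [La] = Af"
  unfolding tw_single Af_def deltaW_def using n4 by (intro ext) auto

definition Ainv where "Ainv = (\<lambda>q. if q = 1 then n-2 else if 2 \<le> q \<and> q \<le> n-2 then q-1 else q)"

lemma A_pow: "j \<le> n-3 \<Longrightarrow> (tw [La] ^^ j) q =
   (if 1 \<le> q \<and> q \<le> n-2 then (if q + j \<le> n-2 then q + j else q + j - (n-2)) else q)"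
proof (induction j)
  case 0 then show ?case by simp
next
  case (Suc j)
  have IH: "(tw [La] ^^ j) q =
   (if 1 \<le> q \<and> q \<le> n-2 then (if q + j \<le> n-2 then q + j else q + j - (n-2)) else q)"
    using Suc by simp
  have e: "(tw [La] ^^ Suc j) q = Af ((tw [La] ^^ j) q)" by (simp add: tw_La)
  show ?case
  proof (cases "1 \<le> q \<and> q \<le> n-2")
    case False
    have v: "(tw [La] ^^ j) q = q" using IH False by auto
    have "Af q = q" using False n4 by (auto simp: Af_def)
    then show ?thesis using e v False by auto
  next
    case True
    show ?thesis
    proof (cases "q + j < n-2")
      case True2: True
      then show ?thesis using e IH True by (simp add: Af_def)
    next
      case F2: False
      show ?thesis
      proof (cases "q + j = n-2")
        case True3: True
        then show ?thesis using e IH True n4 by (simp add: Af_def)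
      next
        case F3: False
        have v: "(tw [La] ^^ j) q = q + j - (n-2)" using IH True F2 F3 by simp
        have a: "1 \<le> q + j - (n-2)" "q + j - (n-2) < n-2" using F2 F3 True Suc.prems n4 by arith+
        have b0: "\<And>v. 1 \<le> v \<Longrightarrow> v < n-2 \<Longrightarrow> Af v = v + 1" by (simp add: Af_def)
        have b: "Af (q + j - (n-2)) = q + j - (n-2) + 1" by (rule b0[OF a])
        have c: "q + j - (n-2) + 1 = q + Suc j - (n-2)" using F2 F3 by arith
        have "(tw [La] ^^ Suc j) q = q + Suc j - (n-2)" using e v b c by simp
        then show ?thesis using True F2 F3 by simp
      qed
    qed
  qed
qed

lemma A_pow_S: "j \<ge> 1 \<Longrightarrow> (tw [La] ^^ j) \<in> S n"
proof (induction j)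
  case 0 then show ?case by simp
next
  case (Suc j)
  show ?case
  proof (cases "j = 0")
    case True then show ?thesis by (simp add: letter_S)
  next
    case False
    have "tw [La] ^^ Suc j = tw [La] \<circ> (tw [La] ^^ j)" by simp
    then show ?thesis using Suc False S_comp[OF _ letter_S] by (metis bot_nat_0.not_eq_extremum less_one linorder_not_le)
  qed
qed

lemma Ainv_S: "Ainv \<in> S n"
proof -
  have "Ainv = tw [La] ^^ (n-3)"
    using n4 by (auto simp: fun_eq_iff A_pow Ainv_def)
  then show ?thesis using A_pow_S n4 by simp
qed

lemma Ainv_val: "2 \<le> x \<Longrightarrow> x \<le> n-2 \<Longrightarrow> Ainv x = x - 1" "Ainv 1 = n-2"
  "x = 0 \<or> x > n-2 \<Longrightarrow> Ainv x = x"
  using n4 by (auto simp: Ainv_def)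

lemma Af_Ainv: "Af (Ainv x) = x"
  using n4 by (auto simp: Ainv_def Af_def)

lemma Ainv_inj: "Ainv x = Ainv y \<Longrightarrow> x = y"
  by (metis Af_Ainv)

end

context W begin
lemma adj_S: "1 \<le> i \<Longrightarrow> i + 1 \<le> n-2 \<Longrightarrow> Transposition.transpose i (i+1) \<in> S n"
proof (induction i)
  case 0 then show ?case by simp
next
  case (Suc i)
  show ?case
  proof (cases "i = 0")
    case True then show ?thesis using b_eq letter_S by (metis One_nat_def Suc_1 add.commute plus_1_eq_Suc)
  next
    case False
    have a1: "Ainv (i+1) = i" using Ainv_val(1)[of "i+1"] Suc.prems False by simp
    have a2: "Ainv (i+2) = i+1" using Ainv_val(1)[of "i+2"] Suc.prems False by simp
    have "Transposition.transpose (Suc i) (Suc i + 1) x = (Af \<circ> Transposition.transpose i (i+1) \<circ> Ainv) x" for x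
    proof -
      consider "x = i+1" | "x = i+2" | "x \<noteq> i+1 \<and> x \<noteq> i+2" by blast
      then show ?thesis
      proof cases
        case 1 then show ?thesis using a1 Suc.prems False by (simp add: Af_def)
      next
        case 2 then show ?thesis using a2 Suc.prems False by (simp add: Af_def)
      next
        case 3
        then have "Ainv x \<noteq> i" "Ainv x \<noteq> i+1" using a1 a2 Ainv_inj by metis+
        then show ?thesis using 3 Af_Ainv by simp
      qed
    qed
    then have eq: "Transposition.transpose (Suc i) (Suc i + 1) = tw [La] \<circ> Transposition.transpose i (i+1) \<circ> Ainv"
      unfolding tw_La by (rule ext)
    have "Transposition.transpose i (i+1) \<in> S n" using Suc False by simp
    then show ?thesis unfolding eq using S_comp Ainv_S letter_S by (metis comp_assoc)
  qed
qed

lemma tr_S: "1 \<le> x \<Longrightarrow> x < y \<Longrightarrow> y \<le> n-2 \<Longrightarrow> Transposition.transpose x y \<in> S n"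
proof (induction y)
  case 0 then show ?case by simp
next
  case (Suc y)
  show ?case
  proof (cases "x = y")
    case True then show ?thesis using adj_S Suc by simp
  next
    case False
    have eq: "Transposition.transpose x (Suc y) = Transposition.transpose y (y+1) \<circ> Transposition.transpose x y \<circ> Transposition.transpose y (y+1)"
      using Suc.prems False by (auto simp: fun_eq_iff transpose_def)
    have "Transposition.transpose x y \<in> S n" "Transposition.transpose y (y+1) \<in> S n"
      using Suc False adj_S by auto
    then show ?thesis unfolding eq using S_comp by metis
  qed
qed


lemma tr_S': "x \<in> Mid \<Longrightarrow> y \<in> Mid \<Longrightarrow> Transposition.transpose x y \<in> S n"
  using tr_S[of x y] tr_S[of y x] id_S by (cases x y rule: linorder_cases) (auto simp: transpose_commute)

lemma perm_S: assumes "p permutes Mid" shows "p \<in> S n"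
  using assms finite_atLeastAtMost
proof (induction rule: permutes_induct)
  case id then show ?case using id_S .
next
  case (swap a b p) then show ?case using S_comp tr_S' by blast
qed

end

context W begin
lemma conj_S: "\<pi> permutes Mid \<Longrightarrow> l \<in> S n \<Longrightarrow> (\<And>x. l (\<pi> x) = \<pi> (g x)) \<Longrightarrow> g \<in> S n"
proof -
  assume p: "\<pi> permutes Mid" and l: "l \<in> S n" and c: "\<And>x. l (\<pi> x) = \<pi> (g x)"
  have eq: "g = (inv \<pi> \<circ> l) \<circ> \<pi>"
  proof (rule ext)
    fix x
    have "inv \<pi> (l (\<pi> x)) = inv \<pi> (\<pi> (g x))" by (simp add: c)
    then show "g x = ((inv \<pi> \<circ> l) \<circ> \<pi>) x" by (simp add: permutes_inverses(2)[OF p])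
  qed
  have i: "inv \<pi> \<in> S n" using perm_S permutes_inv[OF p] by blast
  have "inv \<pi> \<circ> l \<in> S n" by (rule S_comp[OF l i])
  then have "(inv \<pi> \<circ> l) \<circ> \<pi> \<in> S n" by (rule S_comp[OF perm_S[OF p]])
  then show ?thesis using eq by simp
qed

definition coll :: "nat \<Rightarrow> nat \<Rightarrow> nat \<Rightarrow> nat" where "coll i j = (\<lambda>q. if q = i then j else q)"

lemma Lc_o: "y \<noteq> n-2 \<Longrightarrow> tw [Lc] y = y" by (simp add: tw_single deltaW_def)
lemma Lc_m: "tw [Lc] (n-2) = 1" using n4 by (simp add: tw_single deltaW_def)
lemma Ld_o: "y \<noteq> n-2 \<Longrightarrow> tw [Ld] y = y" by (simp add: tw_single deltaW_def)
lemma Ld_m: "tw [Ld] (n-2) = 0" using n4 by (simp add: tw_single deltaW_def)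
lemma Lf_o: "y \<noteq> 1 \<Longrightarrow> tw [Lf] y = y" by (simp add: tw_single deltaW_def)
lemma Lf_1: "tw [Lf] 1 = n-1" using n4 by (simp add: tw_single deltaW_def)

lemma collM_S: "i \<in> Mid \<Longrightarrow> j \<in> Mid \<Longrightarrow> i \<noteq> j \<Longrightarrow> coll i j \<in> S n"
proof -
  assume i: "i \<in> Mid" and j: "j \<in> Mid" and ij: "i \<noteq> j"
  define j' where "j' = Transposition.transpose i (n-2) j"
  define \<pi> where "\<pi> = Transposition.transpose j' 1 \<circ> Transposition.transpose i (n-2)"
  have mM: "n-2 \<in> Mid" "1 \<in> Mid" using n4 by auto
  have j'M: "j' \<in> Mid" unfolding j'_def using permutes_in_image[OF permutes_swap_id[OF i mM(1)]] j by blast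
  have pp: "\<pi> permutes Mid" unfolding \<pi>_def
    by (intro permutes_compose permutes_swap_id i j'M mM)
  have j'ne: "j' \<noteq> n-2" using ij unfolding j'_def by (metis transpose_apply_first transpose_involutory)
  have "n - 2 \<noteq> 1" using n4 by simp
  then have pi_i: "\<pi> i = n-2" using j'ne by (simp add: \<pi>_def)
  have pi_j: "\<pi> j = 1" by (simp add: \<pi>_def j'_def[symmetric])
  have inj: "\<pi> x = \<pi> i \<Longrightarrow> x = i" for x using permutes_inj[OF pp] by (meson injD)
  show ?thesis
  proof (rule conj_S[OF pp letter_S[of Lc]])
    fix x
    show "tw [Lc] (\<pi> x) = \<pi> (coll i j x)"
    proof (cases "x = i")
      case True then show ?thesis using pi_i pi_j Lc_m by (simp add: coll_def)
    next
      case False then have "\<pi> x \<noteq> n-2" using inj pi_i by metis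
      then show ?thesis using False Lc_o by (simp add: coll_def)
    qed
  qed
qed

lemma coll0_S: "i \<in> Mid \<Longrightarrow> coll i 0 \<in> S n"
proof -
  assume i: "i \<in> Mid"
  define \<pi> where "\<pi> = Transposition.transpose i (n-2)"
  have mM: "n-2 \<in> Mid" "1 \<in> Mid" using n4 by auto
  have pp: "\<pi> permutes Mid" unfolding \<pi>_def by (intro permutes_swap_id i mM)
  show ?thesis
  proof (rule conj_S[OF pp letter_S[of Ld]])
    fix x
    show "tw [Ld] (\<pi> x) = \<pi> (coll i 0 x)"
    proof (cases "x = i")
      case True
      have "0 \<noteq> i" "0 \<noteq> n-2" using i n4 by auto
      then show ?thesis using True Ld_m by (simp add: coll_def \<pi>_def)
    next
      case False then have "\<pi> x \<noteq> n-2" unfolding \<pi>_def by (metis transpose_apply_first transpose_involutory)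
      then show ?thesis using False Ld_o by (simp add: coll_def)
    qed
  qed
qed

lemma collF_S: "i \<in> Mid \<Longrightarrow> coll i (n-1) \<in> S n"
proof -
  assume i: "i \<in> Mid"
  define \<pi> where "\<pi> = Transposition.transpose i 1"
  have mM: "n-2 \<in> Mid" "1 \<in> Mid" using n4 by auto
  have pp: "\<pi> permutes Mid" unfolding \<pi>_def by (intro permutes_swap_id i mM)
  have ne: "n - 1 \<noteq> i" "n - 1 \<noteq> 1" using i n4 by auto
  show ?thesis
  proof (rule conj_S[OF pp letter_S[of Lf]])
    fix x
    show "tw [Lf] (\<pi> x) = \<pi> (coll i (n-1) x)"
    proof (cases "x = i")
      case True then show ?thesis using ne Lf_1 by (simp add: coll_def \<pi>_def)
    next
      case False then have "\<pi> x \<noteq> 1" unfolding \<pi>_def by (metis transpose_apply_first transpose_involutory)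
      then show ?thesis using False Lf_o by (simp add: coll_def)
    qed
  qed
qed

end

context W begin

definition MM where "MM = {g. (\<forall>q. q \<notin> Mid \<longrightarrow> g q = q) \<and> (\<forall>p\<in>Mid. g p \<in> Mid)}"

lemma MM_S: "g \<in> MM \<Longrightarrow> g \<in> S n"
proof (induction "card Mid - card (g ` Mid)" arbitrary: g rule: less_induct)
  case less
  have gM: "g ` Mid \<subseteq> Mid" using less.prems by (auto simp: MM_def)
  have go: "\<And>q. q \<notin> Mid \<Longrightarrow> g q = q" using less.prems by (auto simp: MM_def)
  show ?case
  proof (cases "inj_on g Mid")
    case True
    then have "g ` Mid = Mid" using gM by (simp add: endo_inj_surj)
    then have "bij_betw g Mid Mid" using True by (simp add: bij_betw_def)
    then have "g permutes Mid" using go by (rule bij_imp_permutes)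
    then show ?thesis by (rule perm_S)
  next
    case False
    then obtain i j where ij: "i \<in> Mid" "j \<in> Mid" "i \<noteq> j" "g i = g j"
      unfolding inj_on_def by blast
    have "card (g ` Mid) \<noteq> card Mid" using False inj_on_iff_eq_card[of Mid g] by simp
    then have lt: "card (g ` Mid) < card Mid" using card_mono[OF _ gM] by fastforce
    have "Mid - g ` Mid \<noteq> {}"
    proof
      assume "Mid - g ` Mid = {}"
      then have "Mid \<subseteq> g ` Mid" by blast
      then have "card Mid \<le> card (g ` Mid)" by (intro card_mono) auto
      then show False using lt by simp
    qed
    then obtain z where z: "z \<in> Mid" "z \<notin> g ` Mid" by blast
    define g' where "g' = g(i := z)"
    have g'MM: "g' \<in> MM" using less.prems z ij unfolding MM_def g'_def by auto
    have img: "g' ` Mid = insert z (g ` Mid)"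
    proof
      show "g' ` Mid \<subseteq> insert z (g ` Mid)" unfolding g'_def by auto
      show "insert z (g ` Mid) \<subseteq> g' ` Mid"
      proof
        fix y assume "y \<in> insert z (g ` Mid)"
        then consider "y = z" | x where "x \<in> Mid" "y = g x" by blast
        then show "y \<in> g' ` Mid"
        proof cases
          case 1 then show ?thesis using ij unfolding g'_def by (metis fun_upd_same imageI)
        next
          case 2
          show ?thesis
          proof (cases "x = i")
            case True then have "y = g' j" using 2 ij by (simp add: g'_def)
            then show ?thesis using ij by blast
          next
            case False then have "y = g' x" using 2 by (simp add: g'_def)
            then show ?thesis using 2 by blast
          qed
        qed
      qed
    qed
    have "card (g' ` Mid) = Suc (card (g ` Mid))"
      unfolding img using z finite_subset[OF gM] by simp
    then have "card Mid - card (g' ` Mid) < card Mid - card (g ` Mid)" using lt by simp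
    then have g'S: "g' \<in> S n" using less.hyps g'MM by blast
    have "g = g' \<circ> coll i j"
      unfolding g'_def coll_def using ij by (auto simp: fun_eq_iff)
    then show ?thesis using S_comp[OF collM_S[OF ij(1,2,3)] g'S] by simp
  qed
qed

definition C1 where "C1 = {t. (\<forall>q. q \<notin> Mid \<longrightarrow> t q = q) \<and> (\<forall>p\<in>Mid. t p < n)}"

lemma C1_S: "t \<in> C1 \<Longrightarrow> t \<in> S n"
proof (induction "card {p\<in>Mid. t p \<notin> Mid}" arbitrary: t rule: less_induct)
  case less
  have to: "\<And>q. q \<notin> Mid \<Longrightarrow> t q = q" and tl: "\<And>p. p \<in> Mid \<Longrightarrow> t p < n"
    using less.prems by (auto simp: C1_def)
  show ?case
  proof (cases "{p\<in>Mid. t p \<notin> Mid} = {}")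
    case True
    then have "t \<in> MM" using to by (auto simp: MM_def)
    then show ?thesis by (rule MM_S)
  next
    case False
    then obtain i where i: "i \<in> Mid" "t i \<notin> Mid" by blast
    have ti: "t i = 0 \<or> t i = n-1" using i tl[OF i(1)] by auto
    define t' where "t' = t(i := i)"
    have t'C: "t' \<in> C1" using less.prems i n4 unfolding C1_def t'_def by auto
    have sub: "{p\<in>Mid. t' p \<notin> Mid} = {p\<in>Mid. t p \<notin> Mid} - {i}"
      using i unfolding t'_def by auto
    have "card {p\<in>Mid. t' p \<notin> Mid} < card {p\<in>Mid. t p \<notin> Mid}"
      unfolding sub using i by (intro card_Diff1_less) auto
    then have t'S: "t' \<in> S n" using less.hyps t'C by blast
    have tti: "t (t i) = t i" using to i by blast
    have eq: "t = t' \<circ> coll i (t i)"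
      unfolding t'_def coll_def using i tti by (auto simp: fun_eq_iff)
    have "coll i (t i) \<in> S n" using ti
    proof
      assume "t i = 0" then show ?thesis using coll0_S[OF i(1)] by simp
    next
      assume "t i = n-1" then show ?thesis using collF_S[OF i(1)] by simp
    qed
    then show ?thesis using S_comp t'S eq by metis
  qed
qed

lemma Le_val: "tw [Le] q = (if q \<le> n-2 then 1 else q)"
  using n4 by (auto simp: tw_single deltaW_def)

definition MS where "MS = {t. (\<forall>q\<ge>n. t q = q) \<and> t (n-1) = n-1 \<and>
   ((t 0 = 0 \<and> (\<forall>p\<in>Mid. t p < n)) \<or> (t 0 \<in> Mid \<and> (\<forall>p\<in>Mid. t p = t 0 \<or> t p = n-1))
    \<or> (t 0 = n-1 \<and> (\<forall>p\<in>Mid. t p = n-1)))}"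

lemma MS_S: "t \<in> MS \<Longrightarrow> t \<in> S n"
proof -
  assume t: "t \<in> MS"
  have tn: "\<And>q. q \<ge> n \<Longrightarrow> t q = q" "t (n-1) = n-1" using t by (auto simp: MS_def)
  have cases: "(t 0 = 0 \<and> (\<forall>p\<in>Mid. t p < n)) \<or> (t 0 \<in> Mid \<and> (\<forall>p\<in>Mid. t p = t 0 \<or> t p = n-1))
    \<or> (t 0 = n-1 \<and> (\<forall>p\<in>Mid. t p = n-1))" using t by (auto simp: MS_def)
  have qc: "\<And>q. q \<notin> Mid \<Longrightarrow> q = 0 \<or> q = n-1 \<or> q \<ge> n" by auto
  consider "t 0 = 0" "\<forall>p\<in>Mid. t p < n" | "t 0 \<in> Mid" "\<forall>p\<in>Mid. t p = t 0 \<or> t p = n-1"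
    | "t 0 = n-1" "\<forall>p\<in>Mid. t p = n-1" using cases by metis
  then show ?thesis
  proof cases
    case 1
    have "t \<in> C1" unfolding C1_def using 1 tn qc by auto
    then show ?thesis by (rule C1_S)
  next
    case 2
    define v where "v = t 0"
    define g where "g = (\<lambda>q. if q \<in> Mid then (if t q = n-1 then n-1 else 0) else q)"
    have gC: "g \<in> C1" unfolding C1_def g_def using n4 by auto
    have pp: "Transposition.transpose 1 v permutes Mid" using 2 n4 unfolding v_def by (intro permutes_swap_id) auto
    have eq: "t = Transposition.transpose 1 v \<circ> tw [Le] \<circ> g"
    proof (rule ext)
      fix q
      consider "q = 0" | "q \<in> Mid" | "q = n-1" | "q \<ge> n" by fastforce
      then show "t q = (Transposition.transpose 1 v \<circ> tw [Le] \<circ> g) q"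
      proof cases
        case 1 then show ?thesis using n4 by (simp add: g_def Le_val v_def)
      next
        case q: 2
        show ?thesis
        proof (cases "t q = n-1")
          case True
          have "n - 1 \<noteq> v" using 2 unfolding v_def by auto
          then show ?thesis using True q n4 by (auto simp: g_def Le_val transpose_def)
        next
          case False then have "t q = v" using 2 q unfolding v_def by auto
          then show ?thesis using False q n4 by (auto simp: g_def Le_val)
        qed
      next
        case 3
        have "n - 1 \<noteq> v" using 2 unfolding v_def by auto
        then show ?thesis using 3 tn n4 by (auto simp: g_def Le_val transpose_def)
      next
        case 4
        have "q \<noteq> v" using 2 4 unfolding v_def by auto
        then show ?thesis using 4 tn n4 by (auto simp: g_def Le_val transpose_def)
      qed
    qed
    show ?thesis unfolding eq using S_comp[OF S_comp[OF C1_S[OF gC] letter_S] perm_S[OF pp]] by (simp add: comp_assoc)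
  next
    case 3
    have eq: "t = tw [Lf] \<circ> tw [Le]"
    proof (rule ext)
      fix q
      consider "q = 0" | "q \<in> Mid" | "q = n-1" | "q \<ge> n" by fastforce
      then show "t q = (tw [Lf] \<circ> tw [Le]) q"
      proof cases
        case 1 then show ?thesis using 3 n4 Lf_1 by (simp add: Le_val)
      next
        case 2 then show ?thesis using 3 n4 Lf_1 by (simp add: Le_val)
      next
        case c: 3 then show ?thesis using 3 n4 Lf_o tn by (simp add: Le_val)
      next
        case 4 then show ?thesis using n4 Lf_o tn by (simp add: Le_val)
      qed
    qed
    show ?thesis unfolding eq using S_comp letter_S by blast
  qed
qed

end

context W begin

lemma ord_MS:
  fixes R :: "nat \<Rightarrow> nat \<Rightarrow> bool" and t :: "nat \<Rightarrow> nat"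
  assumes R0: "\<And>q. q < n \<Longrightarrow> R 0 q" and Rt: "\<And>q. q < n \<Longrightarrow> R q (n-1)"
    and Ra: "\<And>p q. p < n \<Longrightarrow> q < n \<Longrightarrow> R p q \<Longrightarrow> R q p \<Longrightarrow> p = q"
    and Rm: "\<And>p q. p \<in> Mid \<Longrightarrow> q \<in> Mid \<Longrightarrow> R p q \<Longrightarrow> p = q"
    and tn: "\<And>q. q \<ge> n \<Longrightarrow> t q = q" and tl: "\<And>q. q < n \<Longrightarrow> t q < n"
    and tt: "t (n-1) = n-1"
    and tp: "\<And>p q. p < n \<Longrightarrow> q < n \<Longrightarrow> R p q \<Longrightarrow> R (t p) (t q)"
  shows "t \<in> MS"
proof -
  have n0: "0 < n" using n4 by simp
  have t0: "t 0 < n" using tl n0 by simp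
  have mid: "\<And>p. p \<in> Mid \<Longrightarrow> p < n" using n4 by auto
  have R0t: "\<And>p. p \<in> Mid \<Longrightarrow> R (t 0) (t p)" using tp R0 mid n0 by blast
  consider "t 0 = 0" | "t 0 \<in> Mid" | "t 0 = n-1" using t0 by fastforce
  then show ?thesis
  proof cases
    case 1 then show ?thesis using tn tt tl mid unfolding MS_def by auto
  next
    case 2
    have "\<forall>p\<in>Mid. t p = t 0 \<or> t p = n-1"
    proof
      fix p assume p: "p \<in> Mid"
      have tpl: "t p < n" using tl mid p by blast
      have r: "R (t 0) (t p)" using R0t p by blast
      have "t p \<noteq> 0"
      proof
        assume "t p = 0"
        then have "R (t 0) 0" using r by simp
        then have "t 0 = 0" using Ra[OF t0 n0] R0[OF t0] by blast
        then show False using 2 by simp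
      qed
      then consider "t p \<in> Mid" | "t p = n-1" using tpl by fastforce
      then show "t p = t 0 \<or> t p = n-1"
      proof cases
        case 1 then show ?thesis using Rm[OF 2 1 r] by simp
      qed simp
    qed
    then show ?thesis using tn tt 2 unfolding MS_def by auto
  next
    case 3
    have "\<forall>p\<in>Mid. t p = n-1"
    proof
      fix p assume p: "p \<in> Mid"
      have tpl: "t p < n" using tl mid p by blast
      have r: "R (n-1) (t p)" using R0t p 3 by simp
      show "t p = n-1" using Ra[OF tpl _ Rt[OF tpl] ] r n0 by simp
    qed
    then show ?thesis using tn tt 3 unfolding MS_def by auto
  qed
qed

definition AR where "AR p q \<longleftrightarrow> p = 0 \<or> q = n-1 \<or> p = q"

lemma deltaW_AR: "p < n \<Longrightarrow> q < n \<Longrightarrow> AR p q \<Longrightarrow> AR (deltaW n p x) (deltaW n q x)"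
  using n4 by (cases x) (auto simp: AR_def deltaW_def)

lemma stepsW_AR: "p < n \<Longrightarrow> q < n \<Longrightarrow> AR p q \<Longrightarrow> AR (steps (deltaW n) p w) (steps (deltaW n) q w)"
proof (induction w arbitrary: p q)
  case Nil then show ?case by simp
next
  case (Cons x w) then show ?case using deltaW_AR deltaW_lt by simp
qed

lemma stepsW_top: "steps (deltaW n) (n-1) w = n-1"
proof (induction w)
  case Nil then show ?case by simp
next
  case (Cons x w)
  have "deltaW n (n-1) x = n-1" using n4 by (cases x) (auto simp: deltaW_def)
  then show ?case using Cons by simp
qed

lemma S_MS: "t \<in> S n \<Longrightarrow> t \<in> MS"
proof -
  assume "t \<in> S n"
  then obtain w where t: "t = tw w" unfolding S_mem by blast
  show ?thesis
  proof (rule ord_MS[where R = AR])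
    show "\<And>q. q < n \<Longrightarrow> AR 0 q" "\<And>q. q < n \<Longrightarrow> AR q (n-1)" by (auto simp: AR_def)
    show "\<And>p q. p < n \<Longrightarrow> q < n \<Longrightarrow> AR p q \<Longrightarrow> AR q p \<Longrightarrow> p = q" using n4 by (auto simp: AR_def)
    show "\<And>p q. p \<in> Mid \<Longrightarrow> q \<in> Mid \<Longrightarrow> AR p q \<Longrightarrow> p = q" using n4 by (auto simp: AR_def)
    show "\<And>q. q \<ge> n \<Longrightarrow> t q = q" "\<And>q. q < n \<Longrightarrow> t q < n" unfolding t transf_def
      using stepsW_lt by auto
    show "t (n-1) = n-1" unfolding t transf_def using stepsW_top by simp
    show "\<And>p q. p < n \<Longrightarrow> q < n \<Longrightarrow> AR p q \<Longrightarrow> AR (t p) (t q)" unfolding t transf_def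
      using stepsW_AR by simp
  qed
qed

lemma S_eq_MS: "S n = MS" using S_MS MS_S by blast

end


definition NUM :: "nat \<Rightarrow> bool" where
  "NUM n \<longleftrightarrow> n^(n-3)*(n+1) + (\<Sum>k\<in>{1..n-2}. (k+1)^(n-3)*(k+2)) + 2 < 2*(n^(n-2) + (n-2)*2^(n-2) + 1)"

lemma NUM_4: "NUM 4"
  unfolding NUM_def atLeastAtMost_upt sum_set_upt_conv_sum_list_nat
  by (simp add: upt_rec; (simp only: One_nat_def[symmetric] Suc_1 Suc_numeral)?; simp)

lemma NUM_5: "NUM 5"
  unfolding NUM_def atLeastAtMost_upt sum_set_upt_conv_sum_list_nat
  by (simp add: upt_rec; (simp only: One_nat_def[symmetric] Suc_1 Suc_numeral)?; simp)

lemma NUM_6: "NUM 6"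
  unfolding NUM_def atLeastAtMost_upt sum_set_upt_conv_sum_list_nat
  by (simp add: upt_rec; (simp only: One_nat_def[symmetric] Suc_1 Suc_numeral)?; simp)

lemma NUM_7: "NUM 7"
  unfolding NUM_def atLeastAtMost_upt sum_set_upt_conv_sum_list_nat
  by (simp add: upt_rec; (simp only: One_nat_def[symmetric] Suc_1 Suc_numeral)?; simp)

lemma NUM_8: "NUM 8"
  unfolding NUM_def atLeastAtMost_upt sum_set_upt_conv_sum_list_nat
  by (simp add: upt_rec; (simp only: One_nat_def[symmetric] Suc_1 Suc_numeral)?; simp)

lemma NUM_9: "NUM 9"
  unfolding NUM_def atLeastAtMost_upt sum_set_upt_conv_sum_list_nat
  by (simp add: upt_rec; (simp only: One_nat_def[symmetric] Suc_1 Suc_numeral)?; simp)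

lemma NUM_10: "NUM 10"
  unfolding NUM_def atLeastAtMost_upt sum_set_upt_conv_sum_list_nat
  by (simp add: upt_rec; (simp only: One_nat_def[symmetric] Suc_1 Suc_numeral)?; simp)

lemma NUM_11: "NUM 11"
  unfolding NUM_def atLeastAtMost_upt sum_set_upt_conv_sum_list_nat
  by (simp add: upt_rec; (simp only: One_nat_def[symmetric] Suc_1 Suc_numeral)?; simp)

lemma NUM_12: "NUM 12"
  unfolding NUM_def atLeastAtMost_upt sum_set_upt_conv_sum_list_nat
  by (simp add: upt_rec; (simp only: One_nat_def[symmetric] Suc_1 Suc_numeral)?; simp)

lemma NUM_small: "n \<in> {4..12} \<Longrightarrow> NUM n"
proof -
  assume "n \<in> {4..12}"
  then consider "n=4"|"n=5"|"n=6"|"n=7"|"n=8"|"n=9"|"n=10"|"n=11"|"n=12" by fastforce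
  then show ?thesis using NUM_4 NUM_5 NUM_6 NUM_7 NUM_8 NUM_9 NUM_10 NUM_11 NUM_12 by cases simp_all
qed

lemma binom_aux: "(u::nat) * (2*u^2 + 2*(Suc k)*u + Suc k * k) + k*(k-1) = (u+1) * (2*u^2 + 2*k*u + k*(k-1))"
  by (cases k) (simp_all add: algebra_simps power2_eq_square)

lemma binom_ineq: "(u::nat)^k * (2*u^2 + 2*k*u + k*(k-1)) \<le> 2*u^2*(u+1)^k"
proof (induction k)
  case 0 then show ?case by simp
next
  case (Suc k)
  have "u^(Suc k) * (2*u^2 + 2*(Suc k)*u + Suc k * (Suc k - 1)) = u^k * (u * (2*u^2 + 2*(Suc k)*u + Suc k * k))"
    by (simp add: algebra_simps)
  also have "\<dots> \<le> u^k * ((u+1) * (2*u^2 + 2*k*u + k*(k-1)))"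
    by (rule mult_le_mono2) (metis binom_aux le_add1)
  also have "\<dots> = (u+1) * (u^k * (2*u^2 + 2*k*u + k*(k-1)))" by (simp add: algebra_simps)
  also have "\<dots> \<le> (u+1) * (2*u^2*(u+1)^k)" using Suc by (rule mult_le_mono2)
  also have "\<dots> = 2*u^2*(u+1)^(Suc k)" by (simp add: algebra_simps)
  finally show ?case .
qed

lemma double_ineq: "0 < (u::nat) \<Longrightarrow> 2*u^2 \<le> 2*k*u + k*(k-1) \<Longrightarrow> 2*u^k \<le> (u+1)^k"
proof -
  assume u: "0 < u" and c: "2*u^2 \<le> 2*k*u + k*(k-1)"
  have "u^k * (4*u^2) \<le> u^k * (2*u^2 + 2*k*u + k*(k-1))"
    using c by (intro mult_le_mono2) simp
  also have "\<dots> \<le> 2*u^2*(u+1)^k" by (rule binom_ineq)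
  finally have "(2*u^2) * (2*u^k) \<le> (2*u^2) * (u+1)^k" by (simp add: algebra_simps)
  then show ?thesis using u by simp
qed

lemma NUM_large: "n \<ge> 13 \<Longrightarrow> NUM n"
proof -
  assume n: "n \<ge> 13"
  define k where "k = n - 3"
  define b where "b = (\<lambda>j::nat. (j+1)^k*(j+2))"
  have k10: "k \<ge> 10" using n by (simp add: k_def)
  have kk: "2*(k+1) \<le> k*(k-1)"
  proof -
    have "4*(k-1) \<le> k*(k-1)" using k10 by (intro mult_le_mono1) simp
    then show ?thesis using k10 by arith
  qed
  have growth: "2 * b j \<le> b (j+1)" if j: "1 \<le> j" "j \<le> n-3" for j
  proof -
    define u where "u = j+1"
    have uk: "u \<le> k+1" using j by (simp add: u_def k_def)
    have "u*u \<le> u*(k+1)" using uk by (rule mult_le_mono2)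
    then have "2*u^2 \<le> 2*k*u + 2*u" by (simp add: power2_eq_square algebra_simps)
    also have "\<dots> \<le> 2*k*u + k*(k-1)" using uk kk by simp
    finally have "2*u^k \<le> (u+1)^k" by (intro double_ineq) (simp_all add: u_def)
    then have "2*u^k*(u+1) \<le> (u+1)^k*(u+2)" by (intro mult_le_mono) simp_all
    then show ?thesis by (simp add: b_def u_def algebra_simps)
  qed
  have sum_le: "(\<Sum>i\<in>{1..j}. b i) \<le> 2 * b j" if "1 \<le> j" "j \<le> n-2" for j
    using that
  proof (induction j)
    case 0 then show ?case by simp
  next
    case (Suc j)
    show ?case
    proof (cases "j = 0")
      case True then show ?thesis by simp
    next
      case False
      have "(\<Sum>i\<in>{1..Suc j}. b i) = (\<Sum>i\<in>{1..j}. b i) + b (Suc j)" by simp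
      also have "\<dots> \<le> 2 * b j + b (Suc j)" using Suc False by simp
      also have "\<dots> \<le> 2 * b (Suc j)" using growth[of j] Suc False by simp
      finally show ?thesis .
    qed
  qed
  have S: "(\<Sum>i\<in>{1..n-2}. b i) \<le> 2 * b (n-2)" using sum_le n by simp
  have e: "n-2+1 = n-1" "n-2+2 = n" using n by simp_all
  have bn: "b (n-2) = (n-1)^k * n" unfolding b_def by (simp only: e)
  have d: "2*(n-1)^(n-4) \<le> n^(n-4)"
  proof -
    define d where "d = n - 13"
    have nd: "n = d + 13" using n by (simp add: d_def)
    have "2*(n-1)^2 \<le> 2*(n-4)*(n-1) + (n-4)*(n-4-1)"
      unfolding nd by (simp add: algebra_simps power2_eq_square)
    then have "2*(n-1)^(n-4) \<le> (n-1+1)^(n-4)" using n by (intro double_ineq) simp_all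
    then show ?thesis using n by simp
  qed
  have kn: "k = (n-4) + 1" "n - 2 = k + 1" using n by (simp_all add: k_def)
  have "2 * b (n-2) \<le> n^k * (n-1)"
  proof -
    have "2 * b (n-2) = (2*(n-1)^(n-4)) * (n-1) * n" unfolding bn kn(1) by (simp add: algebra_simps)
    also have "\<dots> \<le> n^(n-4) * (n-1) * n" using d by (intro mult_le_mono) simp_all
    also have "\<dots> = n^k * (n-1)" unfolding kn(1) by (simp add: algebra_simps)
    finally show ?thesis .
  qed
  then have "n^k*(n+1) + (\<Sum>i\<in>{1..n-2}. b i) \<le> n^k*(n+1) + n^k*(n-1)" using S by simp
  also have "\<dots> = n^k*((n+1)+(n-1))" by (simp only: add_mult_distrib2)
  also have "(n+1)+(n-1) = 2*n" using n by simp
  also have "n^k*(2*n) = 2 * n^(n-2)" unfolding kn(2) by simp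
  finally have main: "n^k*(n+1) + (\<Sum>i\<in>{1..n-2}. b i) \<le> 2 * n^(n-2)" .
  have pos: "0 < (n-2)*2^(n-2)" using n by simp
  have main': "n^(n-3)*(n+1) + (\<Sum>k\<in>{1..n-2}. (k+1)^(n-3)*(k+2)) \<le> 2 * n^(n-2)"
    using main by (simp only: b_def k_def)
  have gen: "\<And>A B C::nat. A \<le> 2*B \<Longrightarrow> 0 < C \<Longrightarrow> A + 2 < 2*(B+C+1)" by simp
  show ?thesis unfolding NUM_def by (rule gen[OF main' pos])
qed

lemma NUM: "n \<ge> 4 \<Longrightarrow> NUM n"
  using NUM_small NUM_large by (cases "n \<le> 12") auto



lemma sorted_sum:
  fixes R :: "'a \<Rightarrow> 'a \<Rightarrow> bool" and g :: "nat \<Rightarrow> nat"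
  assumes "finite X" and mono: "\<And>x y. x \<le> y \<Longrightarrow> g x \<le> g y"
    and refl: "\<And>x. x \<in> X \<Longrightarrow> R x x"
    and anti: "\<And>x y. x \<in> X \<Longrightarrow> y \<in> X \<Longrightarrow> R x y \<Longrightarrow> R y x \<Longrightarrow> x = y"
    and trans: "\<And>x y z. x \<in> X \<Longrightarrow> y \<in> X \<Longrightarrow> z \<in> X \<Longrightarrow> R x y \<Longrightarrow> R y z \<Longrightarrow> R x z"
  shows "(\<Sum>v\<in>X. g (card {y\<in>X. R v y})) \<le> (\<Sum>k\<in>{1..card X}. g k)"
  using assms(1) refl anti trans
proof (induction "card X" arbitrary: X)
  case 0
  have "X = {}" using 0(1) \<open>finite X\<close> by simp
  then show ?case by simp
next
  case (Suc c X)
  have fin: "finite X" by fact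
  have rf: "\<And>x. x \<in> X \<Longrightarrow> R x x" by fact
  have an: "\<And>x y. x \<in> X \<Longrightarrow> y \<in> X \<Longrightarrow> R x y \<Longrightarrow> R y x \<Longrightarrow> x = y" by fact
  have tr: "\<And>x y z. x \<in> X \<Longrightarrow> y \<in> X \<Longrightarrow> z \<in> X \<Longrightarrow> R x y \<Longrightarrow> R y z \<Longrightarrow> R x z" by fact
  have ne: "X \<noteq> {}" using Suc.hyps(2) by auto
  define up where "up = (\<lambda>v. {y\<in>X. R v y})"
  have finup: "finite (up v)" for v using fin unfolding up_def by simp
  define M where "M = Max ((\<lambda>v. card (up v)) ` X)"
  have "M \<in> (\<lambda>v. card (up v)) ` X" unfolding M_def using fin ne by (intro Max_in) auto
  then obtain v0 where v0X: "v0 \<in> X" and v0M: "card (up v0) = M" by auto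
  have v0le: "card (up v) \<le> card (up v0)" if "v \<in> X" for v
    unfolding v0M M_def using fin that by (intro Max_ge) auto
  have notbelow: "\<not> R v v0" if v: "v \<in> X" "v \<noteq> v0" for v
  proof
    assume r: "R v v0"
    have sub: "up v0 \<subseteq> up v"
    proof
      fix y assume "y \<in> up v0"
      then have "y \<in> X" "R v0 y" unfolding up_def by auto
      then show "y \<in> up v" unfolding up_def using tr[OF v(1) v0X _ r] by blast
    qed
    have vin: "v \<in> up v" unfolding up_def using rf[OF v(1)] v(1) by blast
    have vnot: "v \<notin> up v0"
    proof
      assume "v \<in> up v0"
      then have "R v0 v" unfolding up_def by blast
      then have "v = v0" using an[OF v(1) v0X r] by blast
      then show False using v(2) by blast
    qed
    have "up v0 \<subset> up v" using sub vin vnot by blast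
    then have "card (up v0) < card (up v)" by (intro psubset_card_mono finup)
    then show False using v0le[OF v(1)] by linarith
  qed
  define X2 where "X2 = X - {v0}"
  have cX2: "card X2 = c" using Suc.hyps(2) v0X fin unfolding X2_def by simp
  have finX2: "finite X2" using fin unfolding X2_def by simp
  have upeq: "{y\<in>X. R v y} = {y\<in>X2. R v y}" if "v \<in> X2" for v
  proof -
    have "v \<in> X" "v \<noteq> v0" using that unfolding X2_def by auto
    then have "\<not> R v v0" by (rule notbelow)
    then show ?thesis unfolding X2_def by blast
  qed
  have r1: "\<And>x. x \<in> X2 \<Longrightarrow> R x x" using rf unfolding X2_def by blast
  have r2: "\<And>x y. x \<in> X2 \<Longrightarrow> y \<in> X2 \<Longrightarrow> R x y \<Longrightarrow> R y x \<Longrightarrow> x = y"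
    using an unfolding X2_def by blast
  have r3: "\<And>x y z. x \<in> X2 \<Longrightarrow> y \<in> X2 \<Longrightarrow> z \<in> X2 \<Longrightarrow> R x y \<Longrightarrow> R y z \<Longrightarrow> R x z"
    using tr unfolding X2_def by blast
  have IH: "(\<Sum>v\<in>X2. g (card {y\<in>X2. R v y})) \<le> (\<Sum>k\<in>{1..c}. g k)"
  proof -
    have "(\<Sum>v\<in>X2. g (card {y\<in>X2. R v y})) \<le> (\<Sum>k\<in>{1..card X2}. g k)"
      by (rule Suc.hyps(1)[OF cX2[symmetric] finX2 r1 r2 r3])
    then show ?thesis unfolding cX2 .
  qed
  have "(\<Sum>v\<in>X. g (card {y\<in>X. R v y})) = g (card {y\<in>X. R v0 y}) + (\<Sum>v\<in>X2. g (card {y\<in>X. R v y}))"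
    unfolding X2_def using fin v0X by (simp add: sum.remove)
  also have "(\<Sum>v\<in>X2. g (card {y\<in>X. R v y})) = (\<Sum>v\<in>X2. g (card {y\<in>X2. R v y}))"
    using upeq by (intro sum.cong) auto
  also have "g (card {y\<in>X. R v0 y}) \<le> g (Suc c)"
  proof (rule mono)
    have "card {y\<in>X. R v0 y} \<le> card X" using fin by (intro card_mono) auto
    then show "card {y\<in>X. R v0 y} \<le> Suc c" using Suc.hyps(2) by simp
  qed
  finally have "(\<Sum>v\<in>X. g (card {y\<in>X. R v y})) \<le> g (Suc c) + (\<Sum>k\<in>{1..c}. g k)" using IH by simp
  also have "\<dots> = (\<Sum>k\<in>{1..Suc c}. g k)" by simp
  finally show ?case using Suc.hyps(2) by simp
qed

lemma pairs_card:
  fixes R :: "'a \<Rightarrow> 'a \<Rightarrow> bool"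
  assumes fin: "finite U" and refl: "\<And>x. x \<in> U \<Longrightarrow> R x x"
    and anti: "\<And>x y. x \<in> U \<Longrightarrow> y \<in> U \<Longrightarrow> R x y \<Longrightarrow> R y x \<Longrightarrow> x = y"
  shows "2 * card {(x,y). x \<in> U \<and> y \<in> U \<and> R x y} \<le> card U * (card U + 1)"
proof -
  define C where "C = {(x,y). x \<in> U \<and> y \<in> U \<and> R x y}"
  have CU: "C \<subseteq> U \<times> U" "C\<inverse> \<subseteq> U \<times> U" unfolding C_def by auto
  have finC: "finite C" "finite (C\<inverse>)" using finite_subset[OF CU(1)] finite_subset[OF CU(2)] fin by auto
  have int: "C \<inter> C\<inverse> = (\<lambda>x. (x,x)) ` U"
  proof (rule set_eqI)
    fix p :: "'a \<times> 'a"
    obtain x y where p: "p = (x,y)" by (cases p)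
    show "p \<in> C \<inter> C\<inverse> \<longleftrightarrow> p \<in> (\<lambda>x. (x,x)) ` U"
    proof
      assume "p \<in> C \<inter> C\<inverse>"
      then have "x \<in> U" "y \<in> U" "R x y" "R y x" unfolding p C_def by auto
      then have "x = y" "x \<in> U" using anti by blast+
      then show "p \<in> (\<lambda>x. (x,x)) ` U" unfolding p by blast
    next
      assume "p \<in> (\<lambda>x. (x,x)) ` U"
      then obtain z where "z \<in> U" "p = (z,z)" by blast
      then show "p \<in> C \<inter> C\<inverse>" using refl unfolding C_def by simp
    qed
  qed
  have e1: "card C + card (C\<inverse>) = card (C \<union> C\<inverse>) + card (C \<inter> C\<inverse>)"
    by (rule card_Un_Int[OF finC])
  have e2: "card (C \<union> C\<inverse>) \<le> card U * card U"
  proof -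
    have "card (C \<union> C\<inverse>) \<le> card (U \<times> U)" using CU fin by (intro card_mono) auto
    then show ?thesis by (simp add: card_cartesian_product)
  qed
  have e3: "card (C \<inter> C\<inverse>) = card U" unfolding int by (rule card_image) (simp add: inj_on_def)
  have e4: "card (C\<inverse>) = card C" by (rule card_inverse)
  have "2 * card C \<le> card U * card U + card U" using e1 e2 e3 e4 by linarith
  then show ?thesis unfolding C_def[symmetric] by (simp add: algebra_simps)
qed

context W begin

lemma phi_inj: "inj_on (\<lambda>t. (t 0, restrict t Mid)) {t. (\<forall>q\<ge>n. t q = q) \<and> t (n-1) = n-1}"
proof (rule inj_onI)
  fix s t assume s: "s \<in> {t. (\<forall>q\<ge>n. t q = q) \<and> t (n-1) = n-1}"
    and t: "t \<in> {t. (\<forall>q\<ge>n. t q = q) \<and> t (n-1) = n-1}"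
    and eq: "(s 0, restrict s Mid) = (t 0, restrict t Mid)"
  have r: "restrict s Mid = restrict t Mid" using eq by simp
  show "s = t"
  proof (rule ext)
    fix q
    consider "q = 0" | "q \<in> Mid" | "q = n-1" | "q \<ge> n" by fastforce
    then show "s q = t q"
    proof cases
      case 2 then show ?thesis using fun_cong[OF r, of q] by simp
    qed (use s t eq in auto)
  qed
qed

lemma card_le_Sigma:
  assumes F: "F \<subseteq> {t. (\<forall>q\<ge>n. t q = q) \<and> t (n-1) = n-1}"
    and H: "\<And>t. t \<in> F \<Longrightarrow> t 0 < n \<and> restrict t Mid \<in> H (t 0)"
    and fin: "\<And>v. v < n \<Longrightarrow> finite (H v)"
  shows "finite F \<and> card F \<le> (\<Sum>v<n. card (H v))"
proof -
  let ?phi = "\<lambda>t::nat\<Rightarrow>nat. (t 0, restrict t Mid)"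
  have inj: "inj_on ?phi F" using inj_on_subset[OF phi_inj F] .
  have sub: "?phi ` F \<subseteq> Sigma {..<n} H" using H by auto
  have finS: "finite (Sigma {..<n} H)" using fin by (intro finite_SigmaI) auto
  have "finite F" using finite_imageD[OF finite_subset[OF sub finS] inj] .
  moreover have "card F \<le> card (Sigma {..<n} H)" using card_inj_on_le[OF inj sub finS] .
  moreover have "card (Sigma {..<n} H) = (\<Sum>v<n. card (H v))" using fin by (simp add: card_SigmaI)
  ultimately show ?thesis by simp
qed

lemma sum_split: "(\<Sum>v<n. f v) = f 0 + (\<Sum>v\<in>Mid. f v) + f (n-1)"
proof -
  have e: "{..<n} = insert 0 (insert (n-1) Mid)" using n4 by auto
  have "0 \<notin> insert (n-1) Mid" "n-1 \<notin> Mid" using n4 by auto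
  then show ?thesis unfolding e by (simp add: algebra_simps)
qed

lemma cardMid: "card Mid = n-2" by simp

lemma MS_card: "finite MS \<and> card MS \<le> n^(n-2) + (n-2)*2^(n-2) + 1"
proof -
  define H where "H = (\<lambda>v::nat. if v = 0 then PiE Mid (\<lambda>_. {..<n}) else PiE Mid (\<lambda>_. {v, n-1}))"
  have A: "finite MS \<and> card MS \<le> (\<Sum>v<n. card (H v))"
  proof (rule card_le_Sigma)
    show "MS \<subseteq> {t. (\<forall>q\<ge>n. t q = q) \<and> t (n-1) = n-1}" unfolding MS_def by auto
    show "finite (H v)" for v unfolding H_def by (auto intro!: finite_PiE)
    fix t assume t: "t \<in> MS"
    have mid: "\<And>p. p \<in> Mid \<Longrightarrow> p < n" using n4 by auto
    show "t 0 < n \<and> restrict t Mid \<in> H (t 0)"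
      using t n4 mid unfolding MS_def H_def by (auto simp: PiE_iff)
  qed
  have c0: "card (H 0) = n^(n-2)" unfolding H_def by (simp add: card_PiE)
  have cm: "card (H v) = 2^(n-2)" if "v \<in> Mid" for v
  proof -
    have "card {v, n-1} = 2" using that by auto
    then show ?thesis using that unfolding H_def by (simp add: card_PiE)
  qed
  have ct: "card (H (n-1)) = 1" using n4 unfolding H_def by (simp add: card_PiE)
  have "(\<Sum>v<n. card (H v)) = n^(n-2) + (n-2)*2^(n-2) + 1"
    unfolding sum_split c0 ct using cm by simp
  then show ?thesis using A by simp
qed

end

context W begin

lemma H_bound:
  fixes R :: "nat \<Rightarrow> nat \<Rightarrow> bool" and U :: "nat set"
  assumes fin: "finite U" and rf: "\<And>x. x \<in> U \<Longrightarrow> R x x"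
    and an: "\<And>x y. x \<in> U \<Longrightarrow> y \<in> U \<Longrightarrow> R x y \<Longrightarrow> R y x \<Longrightarrow> x = y"
    and ab: "a \<in> Mid" "b \<in> Mid" "a \<noteq> b"
  shows "2 * card {h \<in> PiE Mid (\<lambda>_. U). R (h a) (h b)} \<le> card U ^ (n-3) * (card U + 1)"
proof -
  define HH where "HH = {h \<in> PiE Mid (\<lambda>_. U). R (h a) (h b)}"
  define C where "C = {(x,y). x \<in> U \<and> y \<in> U \<and> R x y}"
  define P where "P = PiE (Mid - {a,b}) (\<lambda>_. U)"
  define psi where "psi = (\<lambda>h::nat\<Rightarrow>nat. (restrict h (Mid - {a,b}), (h a, h b)))"
  have inj: "inj_on psi HH"
  proof (rule inj_onI)
    fix h1 h2 assume h1: "h1 \<in> HH" and h2: "h2 \<in> HH" and e: "psi h1 = psi h2"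
    have e1: "restrict h1 (Mid - {a,b}) = restrict h2 (Mid - {a,b})" and e2: "h1 a = h2 a" "h1 b = h2 b"
      using e unfolding psi_def by auto
    show "h1 = h2"
    proof (rule extensionalityI[of _ Mid])
      show "h1 \<in> extensional Mid" "h2 \<in> extensional Mid" using h1 h2 unfolding HH_def by (auto simp: PiE_def)
      fix x assume x: "x \<in> Mid"
      show "h1 x = h2 x"
      proof (cases "x = a \<or> x = b")
        case True then show ?thesis using e2 by auto
      next
        case False then have "x \<in> Mid - {a,b}" using x by simp
        then show ?thesis using fun_cong[OF e1, of x] by simp
      qed
    qed
  qed
  have sub: "psi ` HH \<subseteq> P \<times> C"
  proof
    fix z assume "z \<in> psi ` HH"
    then obtain h where h: "h \<in> HH" "z = psi h" by blast
    have hU: "\<And>p. p \<in> Mid \<Longrightarrow> h p \<in> U" using h(1) unfolding HH_def by (auto simp: PiE_iff)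
    have "restrict h (Mid - {a,b}) \<in> P" unfolding P_def using hU by auto
    moreover have "(h a, h b) \<in> C" unfolding C_def using hU ab h(1) unfolding HH_def by auto
    ultimately show "z \<in> P \<times> C" unfolding h(2) psi_def by simp
  qed
  have finP: "finite P" unfolding P_def using fin by (intro finite_PiE) auto
  have CU: "C \<subseteq> U \<times> U" unfolding C_def by auto
  have finC: "finite C" using finite_subset[OF CU] fin by simp
  have cMab: "card (Mid - {a,b}) = n - 4"
  proof -
    have "card (Mid - {a,b}) = card Mid - card {a,b}" using ab by (intro card_Diff_subset) auto
    then show ?thesis using ab by simp
  qed
  have "card HH \<le> card (P \<times> C)" by (rule card_inj_on_le[OF inj sub]) (simp add: finP finC)
  also have "card (P \<times> C) = card P * card C" by (rule card_cartesian_product)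
  also have "card P = card U ^ (n-4)"
  proof -
    have "card P = (\<Prod>i\<in>Mid - {a,b}. card U)" unfolding P_def by (rule card_PiE) simp
    also have "\<dots> = card U ^ card (Mid - {a,b})" by (rule prod_constant)
    finally show ?thesis by (simp only: cMab)
  qed
  finally have "2 * card HH \<le> card U ^ (n-4) * (2 * card C)" by simp
  also have "\<dots> \<le> card U ^ (n-4) * (card U * (card U + 1))"
    using pairs_card[of U R, OF fin rf an] unfolding C_def by (intro mult_le_mono2) simp
  also have "\<dots> = card U ^ (n-3) * (card U + 1)"
  proof -
    have "n - 3 = Suc (n-4)" using n4 by simp
    then show ?thesis by (simp add: algebra_simps)
  qed
  finally show ?thesis unfolding HH_def .
qed

lemma O_card:
  fixes R :: "nat \<Rightarrow> nat \<Rightarrow> bool" and F :: "(nat \<Rightarrow> nat) set"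
  assumes R0: "\<And>q. q < n \<Longrightarrow> R 0 q" and Rt: "\<And>q. q < n \<Longrightarrow> R q (n-1)"
    and Rr: "\<And>x. R x x"
    and Ra: "\<And>p q. p < n \<Longrightarrow> q < n \<Longrightarrow> R p q \<Longrightarrow> R q p \<Longrightarrow> p = q"
    and Rtr: "\<And>x y z. R x y \<Longrightarrow> R y z \<Longrightarrow> R x z"
    and ab: "a \<in> Mid" "b \<in> Mid" "a \<noteq> b" "R a b"
    and F: "\<And>t. t \<in> F \<Longrightarrow> (\<forall>q\<ge>n. t q = q) \<and> t (n-1) = n-1 \<and> (\<forall>q<n. t q < n)
              \<and> (\<forall>p q. p < n \<longrightarrow> q < n \<longrightarrow> R p q \<longrightarrow> R (t p) (t q))"
  shows "finite F \<and> card F < n^(n-2) + (n-2)*2^(n-2) + 1"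
proof -
  define U where "U v = {y. y < n \<and> R v y}" for v
  define H where "H v = {h \<in> PiE Mid (\<lambda>_. U v). R (h a) (h b)}" for v
  have finU: "finite (U v)" for v unfolding U_def by simp
  have mid: "\<And>p. p \<in> Mid \<Longrightarrow> p < n" using n4 by auto
  have n0: "0 < n" using n4 by simp
  have A: "finite F \<and> card F \<le> (\<Sum>v<n. card (H v))"
  proof (rule card_le_Sigma)
    show "F \<subseteq> {t. (\<forall>q\<ge>n. t q = q) \<and> t (n-1) = n-1}" using F by blast
    show "finite (H v)" for v
    proof -
      have "H v \<subseteq> PiE Mid (\<lambda>_. U v)" unfolding H_def by blast
      moreover have "finite (PiE Mid (\<lambda>_. U v))" using finU by (intro finite_PiE) auto
      ultimately show ?thesis by (rule finite_subset)
    qed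
    fix t assume t: "t \<in> F"
    have tl: "\<And>q. q < n \<Longrightarrow> t q < n" and tp: "\<And>p q. p < n \<Longrightarrow> q < n \<Longrightarrow> R p q \<Longrightarrow> R (t p) (t q)"
      using F[OF t] by blast+
    have "restrict t Mid \<in> PiE Mid (\<lambda>_. U (t 0))"
    proof -
      have "\<And>p. p \<in> Mid \<Longrightarrow> t p \<in> U (t 0)"
        unfolding U_def using tl tp R0 mid n0 by blast
      then show ?thesis by auto
    qed
    moreover have "R (t a) (t b)" using tp mid ab by blast
    ultimately show "t 0 < n \<and> restrict t Mid \<in> H (t 0)" using tl n0 ab unfolding H_def by auto
  qed
  have Hb: "2 * card (H v) \<le> card (U v)^(n-3) * (card (U v) + 1)" for v
    unfolding H_def
  proof (rule H_bound[OF finU _ _ ab(1,2,3)])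
    show "\<And>x. x \<in> U v \<Longrightarrow> R x x" using Rr by blast
    show "\<And>x y. x \<in> U v \<Longrightarrow> y \<in> U v \<Longrightarrow> R x y \<Longrightarrow> R y x \<Longrightarrow> x = y"
      unfolding U_def using Ra by blast
  qed
  have U0: "card (U 0) = n"
  proof -
    have "U 0 = {..<n}" unfolding U_def using R0 by auto
    then show ?thesis by simp
  qed
  have Ut: "card (U (n-1)) = 1"
  proof -
    have "U (n-1) = {n-1}"
    proof
      show "U (n-1) \<subseteq> {n-1}"
      proof
        fix y assume "y \<in> U (n-1)"
        then have y: "y < n" "R (n-1) y" unfolding U_def by auto
        have "n - 1 < n" using n0 by simp
        then show "y \<in> {n-1}" using Ra[OF _ y(1) y(2) Rt[OF y(1)]] by simp
      qed
      show "{n-1} \<subseteq> U (n-1)" unfolding U_def using n0 Rr by auto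
    qed
    then show ?thesis by simp
  qed
  have Um: "card (U v) = card {y\<in>Mid. R v y} + 1" if v: "v \<in> Mid" for v
  proof -
    have "U v = insert (n-1) {y\<in>Mid. R v y}"
    proof
      show "U v \<subseteq> insert (n-1) {y\<in>Mid. R v y}"
      proof
        fix y assume "y \<in> U v"
        then have y: "y < n" "R v y" unfolding U_def by auto
        have "y \<noteq> 0"
        proof
          assume "y = 0"
          then have "v = 0" using Ra[OF mid[OF v] n0] y(2) R0[OF mid[OF v]] by simp
          then show False using v by simp
        qed
        then show "y \<in> insert (n-1) {y\<in>Mid. R v y}" using y by auto
      qed
      show "insert (n-1) {y\<in>Mid. R v y} \<subseteq> U v" unfolding U_def using Rt mid v n0 by auto
    qed
    moreover have "n - 1 \<notin> {y\<in>Mid. R v y}" by auto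
    ultimately show ?thesis by simp
  qed
  define g where "g k = (k+1)^(n-3)*(k+2)" for k :: nat
  have gmono: "\<And>x y. x \<le> y \<Longrightarrow> g x \<le> g y" unfolding g_def
    by (intro mult_le_mono power_mono) simp_all
  have sorted: "(\<Sum>v\<in>Mid. g (card {y\<in>Mid. R v y})) \<le> (\<Sum>k\<in>{1..card Mid}. g k)"
    by (rule sorted_sum[OF finite_atLeastAtMost gmono]) (use Rr Ra mid Rtr in blast)+
  have s2: "(\<Sum>v<n. 2 * card (H v)) = 2 * (\<Sum>v<n. card (H v))" by (simp add: sum_distrib_left)
  have "2 * card F \<le> (\<Sum>v<n. 2 * card (H v))" unfolding s2 using A by simp
  also have "\<dots> \<le> (\<Sum>v<n. card (U v)^(n-3) * (card (U v) + 1))" using Hb by (intro sum_mono)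
  also have "\<dots> = n^(n-3)*(n+1) + (\<Sum>v\<in>Mid. g (card {y\<in>Mid. R v y})) + 2"
    unfolding sum_split U0 Ut using Um by (simp add: g_def)
  also have "\<dots> \<le> n^(n-3)*(n+1) + (\<Sum>k\<in>{1..n-2}. (k+1)^(n-3)*(k+2)) + 2"
    using sorted unfolding g_def by simp
  also have "\<dots> < 2*(n^(n-2) + (n-2)*2^(n-2) + 1)" using NUM[OF n4] unfolding NUM_def .
  finally show ?thesis using A by simp
qed

end


lemma dfa_steps_lt: "dfa n Al delta \<Longrightarrow> q < n \<Longrightarrow> w \<in> lists Al \<Longrightarrow> steps delta q w < n"
proof (induction w arbitrary: q)
  case Nil then show ?case by simp
next
  case (Cons x w) then show ?case by (simp add: dfa_def)
qed

lemma ideal_mem: "two_sided_ideal Al L \<Longrightarrow> v \<in> L \<Longrightarrow> u \<in> lists Al \<Longrightarrow> x \<in> lists Al \<Longrightarrow> u @ v @ x \<in> L"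
  unfolding two_sided_ideal_def by blast

theorem theorem5:
  fixes n :: nat and Al :: "'a set" and delta :: "nat \<Rightarrow> 'a \<Rightarrow> nat"
  assumes "n \<ge> 4"
    and "dfa n Al delta"
    and "minimal_dfa n Al delta"
    and "two_sided_ideal Al (lang n Al delta)"
    and "card (trans_semigroup n Al delta) = n ^ (n - 2) + (n - 2) * 2 ^ (n - 2) + 1"
  shows "trans_semigroup n Al delta = S n"
proof -
  interpret W n using assms(1) by unfold_locales
  note n4 = assms(1) and D = assms(2) and Mn = assms(3) and I = assms(4) and C = assms(5)
  define L where "L = lang n Al delta"
  define T where "T = trans_semigroup n Al delta"
  define R where "R p q \<longleftrightarrow> (\<forall>w\<in>lists Al. steps delta p w = n-1 \<longrightarrow> steps delta q w = n-1)" for p q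
  have n0: "0 < n" using n4 by simp
  have reach: "\<And>q. q < n \<Longrightarrow> \<exists>w\<in>lists Al. steps delta 0 w = q" using Mn unfolding minimal_dfa_def by blast
  have sink: "\<And>w. w \<in> lists Al \<Longrightarrow> steps delta (n-1) w = n-1"
  proof -
    fix w assume w: "w \<in> lists Al"
    obtain u where u: "u \<in> lists Al" "steps delta 0 u = n-1" using reach[of "n-1"] n0 by auto
    have uL: "u \<in> L" unfolding L_def lang_def using u by simp
    have "[] @ u @ w \<in> L" by (rule ideal_mem[OF I[folded L_def] uL]) (simp_all add: w)
    then have "steps delta 0 (u @ w) = n-1" unfolding L_def lang_def by simp
    then show "steps delta (n-1) w = n-1" using u(2) by (simp add: steps_append)
  qed
  have R0: "\<And>q. q < n \<Longrightarrow> R 0 q"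
  proof -
    fix q assume q: "q < n"
    obtain u where u: "u \<in> lists Al" "steps delta 0 u = q" using reach[OF q] by auto
    show "R 0 q" unfolding R_def
    proof (intro ballI impI)
      fix w assume w: "w \<in> lists Al" and "steps delta 0 w = n-1"
      then have wL: "w \<in> L" unfolding L_def lang_def by simp
      have "u @ w @ [] \<in> L" by (rule ideal_mem[OF I[folded L_def] wL u(1)]) simp
      then have "steps delta 0 (u @ w) = n-1" unfolding L_def lang_def by simp
      then show "steps delta q w = n-1" using u(2) by (simp add: steps_append)
    qed
  qed
  have Rt: "\<And>q. q < n \<Longrightarrow> R q (n-1)" unfolding R_def using sink by blast
  have Rr: "\<And>x. R x x" unfolding R_def by blast
  have Rtr: "\<And>x y z. R x y \<Longrightarrow> R y z \<Longrightarrow> R x z" unfolding R_def by blast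
  have Ra: "\<And>p q. p < n \<Longrightarrow> q < n \<Longrightarrow> R p q \<Longrightarrow> R q p \<Longrightarrow> p = q"
  proof (rule ccontr)
    fix p q assume p: "p < n" and q: "q < n" and r: "R p q" "R q p" and ne: "p \<noteq> q"
    obtain w where w: "w \<in> lists Al" "(steps delta p w = n - 1) \<noteq> (steps delta q w = n - 1)"
      using Mn p q ne unfolding minimal_dfa_def by blast
    then show False using r unfolding R_def by blast
  qed
  have Tprops: "(\<forall>q\<ge>n. t q = q) \<and> t (n-1) = n-1 \<and> (\<forall>q<n. t q < n)
              \<and> (\<forall>p q. p < n \<longrightarrow> q < n \<longrightarrow> R p q \<longrightarrow> R (t p) (t q))" if t: "t \<in> T" for t
  proof -
    obtain w where w: "w \<in> lists Al" "t = transf n delta w"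
      using t unfolding T_def trans_semigroup_def by blast
    have a: "\<forall>q\<ge>n. t q = q" unfolding w(2) transf_def by simp
    have b: "t (n-1) = n-1" unfolding w(2) transf_def using sink[OF w(1)] n0 by simp
    have c: "\<forall>q<n. t q < n" unfolding w(2) transf_def using dfa_steps_lt[OF D _ w(1)] by simp
    have d: "R (t p) (t q)" if pq: "p < n" "q < n" "R p q" for p q
      unfolding R_def
    proof (intro ballI impI)
      fix v assume v: "v \<in> lists Al" and s: "steps delta (t p) v = n-1"
      have wv: "w @ v \<in> lists Al" using w(1) v by simp
      have "steps delta p (w @ v) = n-1" using s pq unfolding w(2) transf_def by (simp add: steps_append)
      then have "steps delta q (w @ v) = n-1" using pq(3) wv unfolding R_def by blast
      then show "steps delta (t q) v = n-1" using pq unfolding w(2) transf_def by (simp add: steps_append)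
    qed
    show ?thesis using a b c d by blast
  qed
  show ?thesis
  proof (cases "\<exists>a b. a \<in> Mid \<and> b \<in> Mid \<and> a \<noteq> b \<and> R a b")
    case True
    then obtain a b where ab: "a \<in> Mid" "b \<in> Mid" "a \<noteq> b" "R a b" by blast
    have "finite T \<and> card T < n^(n-2) + (n-2)*2^(n-2) + 1"
      by (rule O_card[OF R0 Rt Rr Ra Rtr ab Tprops])
    then show ?thesis using C unfolding T_def by simp
  next
    case False
    have Rm: "\<And>p q. p \<in> Mid \<Longrightarrow> q \<in> Mid \<Longrightarrow> R p q \<Longrightarrow> p = q" using False by blast
    have TM: "T \<subseteq> MS"
    proof
      fix t assume t: "t \<in> T"
      note tp = Tprops[OF t]
      show "t \<in> MS"
        by (rule ord_MS[where R = R and t = t, OF R0 Rt Ra Rm]) (use tp in auto)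
    qed
    have fM: "finite MS" and cM: "card MS \<le> n^(n-2) + (n-2)*2^(n-2) + 1" using MS_card by auto
    have "card T \<le> card MS" using card_mono[OF fM TM] .
    then have "card T = card MS" using cM C unfolding T_def by simp
    then have "T = MS" using card_subset_eq[OF fM TM] by simp
    then show ?thesis using S_eq_MS unfolding T_def by simp
  qed
qed


end
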